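(* Let $E$ be a locally convex space over $K$ and $\phi:E\to\mathbb R$ a convex function attaining its minimum value at $0$. Then: (1) $\phi(\lambda x)=\phi(x)$ for all $x\in E$ and $\lambda\in K$ with $|\lambda|=1$; (2) $\phi(x+y)\le\max(\phi(x),\phi(y))$ for all $x,y\in E$.
   Context: $K$ is a field complete with respect to a non-trivial non-archimedean absolute value, $B_K=\{x\in K:|x|\le1\}$. A function $\phi:E\to\mathbb R$ is convex if for all $n$, $x_1,\dots,x_n\in E$ and $\lambda_1,\dots,\lambda_n\in B_K$ with $\sum\lambda_i=1$ one has $\phi(\sum\lambda_ix_i)\le\max_i|\lambda_i|\phi(x_i)$. *)

theory Defs
  imports "HOL-Analysis.Analysis"
begin

definition nonarch_abs :: "('k::field \<Rightarrow> real) \<Rightarrow> bool" where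
  "nonarch_abs absv \<longleftrightarrow>
     (\<forall>x. absv x \<ge> 0) \<and> (\<forall>x. absv x = 0 \<longleftrightarrow> x = 0) \<and>
     (\<forall>x y. absv (x * y) = absv x * absv y) \<and>
     (\<forall>x y. absv (x + y) \<le> max (absv x) (absv y))"

definition nontrivial_abs :: "('k::field \<Rightarrow> real) \<Rightarrow> bool" where
  "nontrivial_abs absv \<longleftrightarrow> (\<exists>x. x \<noteq> 0 \<and> absv x \<noteq> 1)"

definition complete_abs :: "('k::field \<Rightarrow> real) \<Rightarrow> bool" where
  "complete_abs absv \<longleftrightarrow>
     (\<forall>s::nat \<Rightarrow> 'k. (\<forall>e>0. \<exists>N. \<forall>m\<ge>N. \<forall>n\<ge>N. absv (s m - s n) < e) \<longrightarrow>
        (\<exists>l. (\<lambda>n. absv (s n - l)) \<longlonglongrightarrow> 0))"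

definition valued_field :: "('k::field \<Rightarrow> real) \<Rightarrow> bool" where
  "valued_field absv \<longleftrightarrow> nonarch_abs absv \<and> nontrivial_abs absv \<and> complete_abs absv"

definition abs_convex_set ::
  "('k::field \<Rightarrow> real) \<Rightarrow> ('k \<Rightarrow> 'e::ab_group_add \<Rightarrow> 'e) \<Rightarrow> 'e set \<Rightarrow> bool" where
  "abs_convex_set absv smul C \<longleftrightarrow>
     (\<forall>x\<in>C. \<forall>y\<in>C. \<forall>a b. absv a \<le> 1 \<and> absv b \<le> 1 \<longrightarrow> smul a x + smul b y \<in> C)"

definition tvs ::
  "('k::field \<Rightarrow> real) \<Rightarrow> ('k \<Rightarrow> 'e::ab_group_add \<Rightarrow> 'e) \<Rightarrow> 'e topology \<Rightarrow> bool" where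
  "tvs absv smul T \<longleftrightarrow>
     vector_space smul \<and> topspace T = UNIV \<and>
     (\<forall>x y W. openin T W \<and> x + y \<in> W \<longrightarrow>
        (\<exists>U V. openin T U \<and> openin T V \<and> x \<in> U \<and> y \<in> V \<and> (\<forall>u\<in>U. \<forall>v\<in>V. u + v \<in> W))) \<and>
     (\<forall>a x W. openin T W \<and> smul a x \<in> W \<longrightarrow>
        (\<exists>r>0. \<exists>U. openin T U \<and> x \<in> U \<and>
           (\<forall>b. \<forall>u\<in>U. absv (b - a) < r \<longrightarrow> smul b u \<in> W)))"

definition locally_convex_space ::
  "('k::field \<Rightarrow> real) \<Rightarrow> ('k \<Rightarrow> 'e::ab_group_add \<Rightarrow> 'e) \<Rightarrow> 'e topology \<Rightarrow> bool" where
  "locally_convex_space absv smul T \<longleftrightarrow>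
     tvs absv smul T \<and>
     (\<forall>W. openin T W \<and> 0 \<in> W \<longrightarrow>
        (\<exists>C. abs_convex_set absv smul C \<and> C \<subseteq> W \<and>
             (\<exists>U. openin T U \<and> 0 \<in> U \<and> U \<subseteq> C)))"

definition convex_fun ::
  "('k::field \<Rightarrow> real) \<Rightarrow> ('k \<Rightarrow> 'e::ab_group_add \<Rightarrow> 'e) \<Rightarrow> ('e \<Rightarrow> real) \<Rightarrow> bool" where
  "convex_fun absv smul \<phi> \<longleftrightarrow>
     (\<forall>n (x::nat \<Rightarrow> 'e) (l::nat \<Rightarrow> 'k).
        (\<forall>i<n. absv (l i) \<le> 1) \<and> (\<Sum>i<n. l i) = 1 \<longrightarrow>
        \<phi> (\<Sum>i<n. smul (l i) (x i)) \<le> Max ((\<lambda>i. absv (l i) * \<phi> (x i)) ` {..<n}))"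

end

theory Submission
  imports Defs
begin

lemma conv3:
  assumes "convex_fun absv smul \<phi>" "absv p \<le> 1" "absv q \<le> 1" "absv r \<le> 1" "p + q + r = 1"
  shows "\<phi> (smul p a + smul q b + smul r c) \<le> max (absv p * \<phi> a) (max (absv q * \<phi> b) (absv r * \<phi> c))"
proof -
  have "\<forall>i<3. absv ([p,q,r] ! i) \<le> 1"
    using assms by (auto simp: numeral_3_eq_3 less_Suc_eq)
  moreover have "(\<Sum>i<3. [p,q,r] ! i) = 1" using assms
    by (simp add: numeral_3_eq_3 lessThan_Suc add.commute add.left_commute)
  ultimately have "\<phi> (\<Sum>i<3. smul ([p,q,r] ! i) ([a,b,c] ! i))
     \<le> Max ((\<lambda>i. absv ([p,q,r] ! i) * \<phi> ([a,b,c] ! i)) ` {..<3})"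
    using assms(1) unfolding convex_fun_def by blast
  moreover have "(\<Sum>i<3. smul ([p,q,r] ! i) ([a,b,c] ! i)) = smul p a + smul q b + smul r c"
    by (simp add: numeral_3_eq_3 lessThan_Suc add.commute add.left_commute)
  moreover have "Max ((\<lambda>i. absv ([p,q,r] ! i) * \<phi> ([a,b,c] ! i)) ` {..<3})
     = max (absv p * \<phi> a) (max (absv q * \<phi> b) (absv r * \<phi> c))"
    by (simp add: numeral_3_eq_3 lessThan_Suc image_insert max.commute max.left_commute)
  ultimately show ?thesis by simp
qed

theorem mainTheorem6:
  fixes absv :: "'k::field \<Rightarrow> real"
    and smul :: "'k \<Rightarrow> 'e::ab_group_add \<Rightarrow> 'e"
    and T :: "'e topology"
    and \<phi> :: "'e \<Rightarrow> real"
  assumes "valued_field absv"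
    and "locally_convex_space absv smul T"
    and "convex_fun absv smul \<phi>"
    and "\<forall>x. \<phi> 0 \<le> \<phi> x"
  shows "(\<forall>x c. absv c = 1 \<longrightarrow> \<phi> (smul c x) = \<phi> x) \<and>
         (\<forall>x y. \<phi> (x + y) \<le> max (\<phi> x) (\<phi> y))"
proof -
  have na: "nonarch_abs absv" using assms(1) unfolding valued_field_def by blast
  have vs: "vector_space smul" using assms(2) unfolding locally_convex_space_def tvs_def by blast
  have mul: "\<And>x y. absv (x * y) = absv x * absv y" using na unfolding nonarch_abs_def by blast
  have nz: "\<And>x. absv x = 0 \<longleftrightarrow> x = 0" using na unfolding nonarch_abs_def by blast
  have a1: "absv 1 = 1"
  proof -
    have "absv 1 = absv 1 * absv 1" using mul[of 1 1] by simp
    moreover have "absv 1 \<noteq> 0" using nz[of 1] by simp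
    ultimately show ?thesis by (metis mult_cancel_left1)
  qed
  have am1: "absv (-1) = 1"
  proof -
    have m11: "(-1::'k) * (-1) = 1" by simp
    have sq: "absv (-1) * absv (-1) = 1" using mul[of "-1" "-1"] a1 m11 by metis
    have "absv (-1) \<ge> 0" using na unfolding nonarch_abs_def by blast
    have "(absv (-1) - 1) * (absv (-1) + 1) = 0" using sq by (simp add: algebra_simps)
    moreover have "absv (-1) + 1 \<noteq> 0" using \<open>absv (-1) \<ge> 0\<close> by simp
    ultimately show ?thesis by simp
  qed
  have aneg: "absv (- c) = absv c" for c
  proof -
    have "absv (- c) = absv ((-1) * c)" by simp
    also have "\<dots> = absv c" by (simp only: mul am1 mult_1)
    finally show ?thesis .
  qed
  have md: "module smul" using vs by (simp add: vector_space_def module_def)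
  have z: "\<And>c. smul c 0 = 0" by (rule module.scale_zero_right[OF md])
  have one: "\<And>x. smul 1 x = x" by (rule module.scale_one[OF md])
  have ss: "\<And>a b x. smul a (smul b x) = smul (a * b) x" by (rule module.scale_scale[OF md])
  have le: "\<phi> (smul c x) \<le> \<phi> x" if "absv c = 1" for c x
  proof -
    have "\<phi> (smul c x + smul 1 0 + smul (-c) 0) \<le> max (absv c * \<phi> x) (max (absv 1 * \<phi> 0) (absv (-c) * \<phi> 0))"
      by (rule conv3[OF assms(3)]) (use that a1 aneg in auto)
    moreover have "smul c x + smul 1 0 + smul (-c) 0 = smul c x" by (simp only: z add_0_right)
    moreover have "absv (-c) = 1" using that aneg by simp
    ultimately have "\<phi> (smul c x) \<le> max (\<phi> x) (max (\<phi> 0) (\<phi> 0))" using that a1 by simp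
    moreover have "\<phi> 0 \<le> \<phi> x" using assms(4) by blast
    ultimately show ?thesis by linarith
  qed
  have P1: "\<forall>x c. absv c = 1 \<longrightarrow> \<phi> (smul c x) = \<phi> x"
  proof (intro allI impI)
    fix x c assume c: "absv c = 1"
    then have "c \<noteq> 0" using nz[of c] by linarith
    have ic: "absv (inverse c) = 1" 
    proof -
      have "absv (c * inverse c) = absv c * absv (inverse c)" by (rule mul)
      moreover have "c * inverse c = 1" using \<open>c \<noteq> 0\<close> by simp
      ultimately show ?thesis using c a1 by simp
    qed
    have "\<phi> (smul (inverse c) (smul c x)) \<le> \<phi> (smul c x)" using le[OF ic] .
    moreover have "smul (inverse c) (smul c x) = x" using ss[of "inverse c" c x] \<open>c \<noteq> 0\<close> one by simp
    ultimately have "\<phi> x \<le> \<phi> (smul c x)" by simp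
    then show "\<phi> (smul c x) = \<phi> x" using le[OF c, of x] by linarith
  qed
  have P2: "\<forall>x y. \<phi> (x + y) \<le> max (\<phi> x) (\<phi> y)"
  proof (intro allI)
    fix x y
    have "\<phi> (smul 1 x + smul 1 y + smul (-1) 0) \<le> max (absv 1 * \<phi> x) (max (absv 1 * \<phi> y) (absv (-1) * \<phi> 0))"
      by (rule conv3[OF assms(3)]) (use a1 am1 in auto)
    moreover have "smul 1 x + smul 1 y + smul (-1) 0 = x + y" by (simp only: z one add_0_right)
    ultimately have "\<phi> (x + y) \<le> max (\<phi> x) (max (\<phi> y) (\<phi> 0))" using a1 am1 by simp
    then show "\<phi> (x + y) \<le> max (\<phi> x) (\<phi> y)" using assms(4)[rule_format, of x] by linarith
  qed
  show ?thesis using P1 P2 by blast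
qed

end
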